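(* Let $p$ be prime, $G=\mathbb{Z}_{p^2}\times\mathbb{Z}_p$, and $A\subset G$ with $\#A>p^2$. Then for every $\mathbf{d}\in G\setminus\{0\}$ we have $(A-A)\cap\mathbf{d}G^*\neq\emptyset$.
   Context: $G^*$ denotes the set of invertible elements of the ring $G=\mathbb{Z}_{p^2}\times\mathbb{Z}_p$, i.e. pairs $(u_1,u_2)$ with $u_1\in\mathbb{Z}_{p^2}^*$, $u_2\in\mathbb{Z}_p^*$; for $\mathbf{d}=(d_1,d_2)$, $\mathbf{d}G^*=\{(d_1u_1,d_2u_2):(u_1,u_2)\in G^*\}$. $A-A=\{a-a':a,a'\in A\}$. *)

theory Defs
  imports "HOL-Number_Theory.Number_Theory"
begin

text \<open>The group G = Z_{p^2} x Z_p, represented by canonical residues: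
  pairs (x1,x2) of integers with 0 <= x1 < p^2 and 0 <= x2 < p.\<close>

definition Gset :: "int \<Rightarrow> (int \<times> int) set" where
  "Gset p = {0..<p^2} \<times> {0..<p}"

definition Gsub :: "int \<Rightarrow> int \<times> int \<Rightarrow> int \<times> int \<Rightarrow> int \<times> int" where
  "Gsub p a b = ((fst a - fst b) mod p^2, (snd a - snd b) mod p)"

definition diffset :: "int \<Rightarrow> (int \<times> int) set \<Rightarrow> (int \<times> int) set" where
  "diffset p A = {Gsub p a a' | a a'. a \<in> A \<and> a' \<in> A}"

definition Gunits :: "int \<Rightarrow> (int \<times> int) set" where
  "Gunits p = {u \<in> Gset p. coprime (fst u) (p^2) \<and> coprime (snd u) p}"

definition dGunits :: "int \<Rightarrow> int \<times> int \<Rightarrow> (int \<times> int) set" where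
  "dGunits p d = {((fst d * fst u) mod p^2, (snd d * snd u) mod p) | u. u \<in> Gunits p}"

end

theory Submission
  imports Defs
begin

lemma mem_dG:
  fixes p ta tb :: int
  assumes p: "prime p" and c1: "coprime ta p" and c2: "coprime tb p"
   and h1: "[fst x - fst x' = fst d * ta] (mod p^2)"
   and h2: "[snd x - snd x' = snd d * tb] (mod p)"
  shows "Gsub p x x' \<in> dGunits p d"
proof -
  have p0: "p > 1" using p prime_gt_1_int by auto
  define u where "u = (ta mod p^2, tb mod p)"
  have "coprime ta (p^2)" using c1 by simp
  then have "coprime (ta mod p^2) (p^2)" using p0 by (subst coprime_mod_left_iff) auto
  moreover have "coprime (tb mod p) p" using c2 p0 by simp
  ultimately have "u \<in> Gunits p" unfolding Gunits_def Gset_def u_def using p0 by auto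
  moreover have "Gsub p x x' = ((fst d * fst u) mod p^2, (snd d * snd u) mod p)"
    using h1 h2 unfolding Gsub_def u_def cong_def by (simp add: mod_mult_right_eq)
  ultimately show ?thesis unfolding dGunits_def by blast
qed

lemma small_coprime:
  fixes p k :: int
  assumes p: "prime p" and "k \<noteq> 0" and "\<bar>k\<bar> < p"
  shows "coprime k p"
proof -
  have "\<not> p dvd k"
  proof
    assume "p dvd k"
    then have "\<bar>p\<bar> \<le> \<bar>k\<bar>" using dvd_imp_le_int assms by blast
    then show False using assms by simp
  qed
  then show ?thesis using p prime_imp_coprime by (metis coprime_commute)
qed

lemma key:
  fixes p :: int and f :: "int \<times> int \<Rightarrow> 'b"
  assumes A: "A \<subseteq> Gset p" and cA: "card A > p^2"
    and T: "finite T" "int (card T) \<le> p^2" "f ` Gset p \<subseteq> T"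
    and P: "\<And>x x'. x \<in> Gset p \<Longrightarrow> x' \<in> Gset p \<Longrightarrow> x \<noteq> x' \<Longrightarrow> f x = f x'
              \<Longrightarrow> Gsub p x x' \<in> dGunits p d"
  shows "diffset p A \<inter> dGunits p d \<noteq> {}"
proof -
  have "card (f ` A) \<le> card T" using T A by (meson card_mono image_mono order_trans)
  then have "card (f ` A) < card A" using T cA by linarith
  then have "\<not> inj_on f A" using card_image by fastforce
  then obtain x x' where "x \<in> A" "x' \<in> A" "x \<noteq> x'" "f x = f x'" unfolding inj_on_def by blast
  moreover have "Gsub p x x' \<in> diffset p A" using calculation unfolding diffset_def by blast
  ultimately show ?thesis using P A by blast
qed

lemma divbnd: fixes p a :: int assumes "p>0" "0\<le>a" "a<p^2" shows "0 \<le> a div p \<and> a div p < p"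
proof -
  have "p * (a div p) \<le> a" using assms by (metis le_add_same_cancel1 pos_mod_sign mult_div_mod_eq)
  then have "p * (a div p) < p * p" using assms unfolding power2_eq_square by linarith
  then have "a div p < p" using assms(1) mult_less_cancel_left_pos by blast
  then show ?thesis using assms by (simp add: pos_imp_zdiv_nonneg_iff)
qed
lemma same_div: fixes p a b :: int assumes "p>0" "a div p = b div p" shows "\<bar>a - b\<bar> < p"
proof -
  have "a = p*(a div p) + a mod p" "b = p*(b div p) + b mod p" by simp_all
  moreover have "p*(a div p) = p*(b div p)" using assms by simp
  moreover have "0 \<le> a mod p" "a mod p < p" "0 \<le> b mod p" "b mod p < p" using assms by simp_all
  ultimately show ?thesis by linarith
qed
lemma same_mod: fixes p a b :: int assumes "a mod p = b mod p" shows "a - b = p*(a div p - b div p)"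
proof -
  have "a = p*(a div p) + a mod p" "b = p*(b div p) + b mod p" by simp_all
  moreover have "p*(a div p - b div p) = p*(a div p) - p*(b div p)" by (simp add: right_diff_distrib)
  ultimately show ?thesis using assms by linarith
qed
lemma scale: fixes p e ie m :: int assumes "[e*ie = 1] (mod p)" shows "[p*m = p*e*(m*ie)] (mod p^2)"
proof -
  have "p dvd e*ie - 1" using assms by (simp add: cong_iff_dvd_diff)
  then have "p*p dvd p*(m*(e*ie - 1))" by (simp add: mult_dvd_mono)
  moreover have "p*m - p*e*(m*ie) = - (p*(m*(e*ie - 1)))" by (simp add: algebra_simps)
  ultimately have "p^2 dvd p*m - p*e*(m*ie)" by (simp add: power2_eq_square)
  then show ?thesis by (simp add: cong_iff_dvd_diff)
qed

lemma inv_cong: fixes a i k m :: int assumes "[a*i = 1] (mod m)" shows "[k = a*(k*i)] (mod m)"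
proof -
  have "[k*(a*i) = k*1] (mod m)" using assms by (rule cong_scalar_left)
  then show ?thesis by (simp add: ac_simps cong_sym_eq)
qed

lemma inv_coprime: fixes a i m :: int assumes "[a*i = 1] (mod m)" shows "coprime i m"
proof -
  have "coprime (a*i) m" using cong_imp_coprime[OF cong_sym[OF assms]] by simp
  then show ?thesis by simp
qed

lemma inv_coprime2: fixes a i p :: int assumes "[a*i = 1] (mod p^2)" shows "coprime i p"
  using inv_coprime[OF assms] by simp

lemma swapc: fixes a b c e m :: int assumes "[a - c = b - e] (mod m)" shows "[a - b = c - e] (mod m)"
proof -
  have "m dvd (a - c) - (b - e)" using assms by (simp add: cong_iff_dvd_diff)
  moreover have "(a - c) - (b - e) = (a - b) - (c - e)" by simp
  ultimately show ?thesis by (simp add: cong_iff_dvd_diff)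
qed

lemma Gset_bnd: "x \<in> Gset p \<Longrightarrow> 0 \<le> fst x \<and> fst x < p^2 \<and> 0 \<le> snd x \<and> snd x < p"
  unfolding Gset_def by auto

lemma eq_small: fixes a b p :: int assumes "a mod p = b mod p" "0 \<le> a" "a < p" "0 \<le> b" "b < p" shows "a = b"
  using assms by simp

lemma dvd_small: fixes a b p :: int assumes "p dvd a - b" "0 \<le> a" "a < p" "0 \<le> b" "b < p" shows "a = b"
proof (rule ccontr)
  assume "a \<noteq> b"
  then have "\<bar>p\<bar> \<le> \<bar>a - b\<bar>" using dvd_imp_le_int assms(1) by simp
  then show False using assms by linarith
qed

lemma caseA0:
  fixes p :: int and A :: "(int \<times> int) set" and d :: "int \<times> int"
  assumes p: "prime p" and A: "A \<subseteq> Gset p" and cA: "card A > p^2"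
    and nd: "\<not> p dvd fst d" and d2: "snd d = 0"
  shows "diffset p A \<inter> dGunits p d \<noteq> {}"
proof -
  have p0: "p > 1" using p prime_gt_1_int by auto
  have "coprime (fst d) p" using nd p prime_imp_coprime coprime_commute by blast
  then have "coprime (fst d) (p^2)" by simp
  then obtain i1 where i1: "[fst d * i1 = 1] (mod p^2)" using cong_solve_coprime_int by blast
  show ?thesis
  proof (rule key[where f="\<lambda>x. (fst x div p, snd x)" and T="{0..<p}\<times>{0..<p}"])
    show "int (card ({0..<p}\<times>{0..<p})) \<le> p^2" using p0 by (simp add: power2_eq_square card_cartesian_product)
    show "(\<lambda>x. (fst x div p, snd x)) ` Gset p \<subseteq> {0..<p}\<times>{0..<p}"
      using divbnd[of p] p0 Gset_bnd[of _ p] by fastforce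
    fix x x' assume x: "x \<in> Gset p" and x': "x' \<in> Gset p" and ne: "x \<noteq> x'"
      and f: "(fst x div p, snd x) = (fst x' div p, snd x')"
    define k where "k = fst x - fst x'"
    have s: "snd x = snd x'" using f by simp
    have "k \<noteq> 0" using ne s unfolding k_def by (simp add: prod_eq_iff)
    moreover have "\<bar>k\<bar> < p" unfolding k_def using same_div[of p "fst x" "fst x'"] f p0 by simp
    ultimately have ck: "coprime k p" using small_coprime p by blast
    show "Gsub p x x' \<in> dGunits p d"
      by (rule mem_dG[where ta="k*i1" and tb=1]) (use p ck inv_cong[OF i1, of k] inv_coprime2[OF i1] s d2 in \<open>simp_all add: k_def\<close>)
  qed (use A cA in auto)
qed


lemma caseA1:
  fixes p :: int and A :: "(int \<times> int) set" and d :: "int \<times> int"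
  assumes p: "prime p" and A: "A \<subseteq> Gset p" and cA: "card A > p^2"
    and nd: "\<not> p dvd fst d" and d2: "coprime (snd d) p"
  shows "diffset p A \<inter> dGunits p d \<noteq> {}"
proof -
  have p0: "p > 1" using p prime_gt_1_int by auto
  have "coprime (fst d) p" using nd p prime_imp_coprime coprime_commute by blast
  then have "coprime (fst d) (p^2)" by simp
  then obtain i1 where i1: "[fst d * i1 = 1] (mod p^2)" using cong_solve_coprime_int by blast
  obtain i2 where i2: "[snd d * i2 = 1] (mod p)" using d2 cong_solve_coprime_int by blast
  show ?thesis
  proof (rule key[where f="\<lambda>x. (fst x div p, (snd x - fst x) mod p)" and T="{0..<p}\<times>{0..<p}"])
    show "int (card ({0..<p}\<times>{0..<p})) \<le> p^2" using p0 by (simp add: power2_eq_square card_cartesian_product)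
    show "(\<lambda>x. (fst x div p, (snd x - fst x) mod p)) ` Gset p \<subseteq> {0..<p}\<times>{0..<p}"
      using divbnd[of p] p0 Gset_bnd[of _ p] by fastforce
    fix x x' assume x: "x \<in> Gset p" and x': "x' \<in> Gset p" and ne: "x \<noteq> x'"
      and f: "(fst x div p, (snd x - fst x) mod p) = (fst x' div p, (snd x' - fst x') mod p)"
    define k where "k = fst x - fst x'"
    have c: "[snd x - fst x = snd x' - fst x'] (mod p)" using f by (simp add: cong_def)
    then have s: "[snd x - snd x' = k] (mod p)" unfolding k_def by (rule swapc)
    have "k \<noteq> 0"
    proof
      assume k0: "k = 0"
      have "p dvd (snd x - snd x') - k" using s by (simp only: cong_iff_dvd_diff)
      then have "p dvd snd x - snd x'" using k0 by simp
      then have "snd x = snd x'" using Gset_bnd[OF x] Gset_bnd[OF x'] by (intro dvd_small) auto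
      then show False using ne k0 unfolding k_def by (simp add: prod_eq_iff)
    qed
    moreover have "\<bar>k\<bar> < p" unfolding k_def using same_div[of p "fst x" "fst x'"] f p0 by simp
    ultimately have ck: "coprime k p" using small_coprime p by blast
    have h2: "[snd x - snd x' = snd d * (k*i2)] (mod p)"
      using cong_trans[OF s inv_cong[OF i2, of k]] .
    show "Gsub p x x' \<in> dGunits p d"
      by (rule mem_dG[where ta="k*i1" and tb="k*i2"])
        (use p ck inv_cong[OF i1, of k] inv_coprime2[OF i1] inv_coprime[OF i2] h2 in \<open>simp_all add: k_def\<close>)
  qed (use A cA in auto)
qed

lemma caseB:
  fixes p :: int and A :: "(int \<times> int) set" and d :: "int \<times> int"
  assumes p: "prime p" and A: "A \<subseteq> Gset p" and cA: "card A > p^2"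
    and e: "fst d = p * e" "coprime e p" and d2: "snd d = 0 \<or> coprime (snd d) p"
  shows "diffset p A \<inter> dGunits p d \<noteq> {}"
proof -
  have p0: "p > 1" using p prime_gt_1_int by auto
  obtain ie where ie: "[e * ie = 1] (mod p)" using e cong_solve_coprime_int by blast
  define c :: int where "c = (if snd d = 0 then 0 else 1)"
  obtain i2 where i2: "snd d \<noteq> 0 \<Longrightarrow> [snd d * i2 = 1] (mod p)" using d2 cong_solve_coprime_int by blast
  show ?thesis
  proof (rule key[where f="\<lambda>x. (fst x mod p, (snd x - c * (fst x div p)) mod p)" and T="{0..<p}\<times>{0..<p}"])
    show "int (card ({0..<p}\<times>{0..<p})) \<le> p^2" using p0 by (simp add: power2_eq_square card_cartesian_product)
    show "(\<lambda>x. (fst x mod p, (snd x - c * (fst x div p)) mod p)) ` Gset p \<subseteq> {0..<p}\<times>{0..<p}"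
      using p0 by auto
    fix x x' assume x: "x \<in> Gset p" and x': "x' \<in> Gset p" and ne: "x \<noteq> x'"
      and f: "(fst x mod p, (snd x - c * (fst x div p)) mod p) = (fst x' mod p, (snd x' - c * (fst x' div p)) mod p)"
    define m where "m = fst x div p - fst x' div p"
    have fm: "fst x - fst x' = p * m" unfolding m_def using same_mod f by simp
    have c0: "[snd x - c * (fst x div p) = snd x' - c * (fst x' div p)] (mod p)" using f by (simp add: cong_def)
    then have s0: "[snd x - snd x' = c * (fst x div p) - c * (fst x' div p)] (mod p)" by (rule swapc)
    then have s: "[snd x - snd x' = c * m] (mod p)" unfolding m_def by (simp add: right_diff_distrib)
    have "m \<noteq> 0"
    proof
      assume m0: "m = 0"
      have "p dvd (snd x - snd x') - c * m" using s by (simp only: cong_iff_dvd_diff)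
      then have "p dvd snd x - snd x'" using m0 by simp
      then have "snd x = snd x'" using Gset_bnd[OF x] Gset_bnd[OF x'] by (intro dvd_small) auto
      then show False using ne m0 fm by (simp add: prod_eq_iff)
    qed
    moreover have "\<bar>m\<bar> < p" unfolding m_def using divbnd[of p "fst x"] divbnd[of p "fst x'"]
      Gset_bnd[OF x] Gset_bnd[OF x'] p0 by auto
    ultimately have cm: "coprime m p" using small_coprime p by blast
    have h1: "[fst x - fst x' = fst d * (m*ie)] (mod p^2)" using fm e scale[OF ie, of m] by (simp add: ac_simps)
    show "Gsub p x x' \<in> dGunits p d"
    proof (cases "snd d = 0")
      case True
      then have "c = 0" unfolding c_def by simp
      then have "[snd x - snd x' = snd d * 1] (mod p)" using s True by simp
      note h2 = this
      show ?thesis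
        by (rule mem_dG[where ta="m*ie" and tb=1, OF p _ _ h1 h2])
          (use cm inv_coprime[OF ie] in simp_all)
    next
      case False
      then have "c = 1" unfolding c_def by simp
      then have "[snd x - snd x' = m] (mod p)" using s by simp
      then have "[snd x - snd x' = snd d * (m*i2)] (mod p)" using cong_trans inv_cong[OF i2[OF False], of m] by blast
      note h2 = this
      show ?thesis
        by (rule mem_dG[where ta="m*ie" and tb="m*i2", OF p _ _ h1 h2])
          (use cm inv_coprime[OF ie] inv_coprime[OF i2[OF False]] in simp_all)
    qed
  qed (use A cA in auto)
qed

lemma caseC:
  fixes p :: int and A :: "(int \<times> int) set" and d :: "int \<times> int"
  assumes p: "prime p" and A: "A \<subseteq> Gset p" and cA: "card A > p^2"
    and d1: "fst d = 0" and d2: "coprime (snd d) p"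
  shows "diffset p A \<inter> dGunits p d \<noteq> {}"
proof -
  have p0: "p > 1" using p prime_gt_1_int by auto
  obtain i2 where i2: "[snd d * i2 = 1] (mod p)" using d2 cong_solve_coprime_int by blast
  show ?thesis
  proof (rule key[where f="\<lambda>x. (fst x, 0::int)" and T="{0..<p^2}\<times>{0}"])
    show "int (card ({0..<p^2}\<times>{0::int})) \<le> p^2" using p0 by (simp add: card_cartesian_product)
    show "(\<lambda>x. (fst x, 0::int)) ` Gset p \<subseteq> {0..<p^2}\<times>{0}"
      using Gset_bnd[of _ p] by fastforce
    fix x x' assume x: "x \<in> Gset p" and x': "x' \<in> Gset p" and ne: "x \<noteq> x'"
      and f: "(fst x, 0::int) = (fst x', 0)"
    define k where "k = snd x - snd x'"
    have "k \<noteq> 0" using ne f unfolding k_def by (simp add: prod_eq_iff)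
    moreover have "\<bar>k\<bar> < p" unfolding k_def using Gset_bnd[OF x] Gset_bnd[OF x'] by auto
    ultimately have ck: "coprime k p" using small_coprime p by blast
    show "Gsub p x x' \<in> dGunits p d"
      by (rule mem_dG[where ta=1 and tb="k*i2"])
        (use p ck inv_cong[OF i2, of k] inv_coprime[OF i2] f d1 in \<open>simp_all add: k_def\<close>)
  qed (use A cA in auto)
qed


theorem lemma5p1:
  fixes p :: int and A :: "(int \<times> int) set" and d :: "int \<times> int"
  assumes "prime p"
    and "A \<subseteq> Gset p"
    and "card A > p^2"
    and "d \<in> Gset p" and "d \<noteq> (0, 0)"
  shows "diffset p A \<inter> dGunits p d \<noteq> {}"
proof -
  note p = assms(1) and A = assms(2) and cA = assms(3)
  have p0: "p > 1" using p prime_gt_1_int by auto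
  have db: "0 \<le> fst d" "fst d < p^2" "0 \<le> snd d" "snd d < p" using Gset_bnd[OF assms(4)] by auto
  have d2c: "snd d = 0 \<or> coprime (snd d) p"
    using small_coprime[OF p, of "snd d"] db by auto
  show ?thesis
  proof (cases "p dvd fst d")
    case False
    show ?thesis
    proof (cases "snd d = 0")
      case True
      then show ?thesis using caseA0[OF p A cA False] by simp
    next
      case F2: False
      then show ?thesis using caseA1[OF p A cA False] d2c by simp
    qed
  next
    case True
    then obtain e where e: "fst d = p * e" by blast
    show ?thesis
    proof (cases "fst d = 0")
      case True
      then have "snd d \<noteq> 0" using assms(5) by (simp add: prod_eq_iff)
      then show ?thesis using caseC[OF p A cA True] d2c by simp
    next
      case False
      then have "e > 0" using e db p0 by (smt (verit) mult_nonneg_nonpos)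
      moreover have "p * e < p * p" using e db by (simp add: power2_eq_square)
      then have "e < p" using p0 by simp
      ultimately have "coprime e p" using small_coprime[OF p, of e] by simp
      then show ?thesis using caseB[OF p A cA e] d2c by simp
    qed
  qed
qed

end
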